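(* Algorithm A with $m=n$ registers solves obstruction-free consensus among the $n$ anonymous processes, i.e., in every execution: (Validity) every decided value was proposed by some process; (Agreement) no two processes decide different values; (OB-termination) if there is a time after which a single process executes steps alone, that process decides; (SV-termination) if all processes propose the same value, every correct (non-crashed) process decides.
   Context: Quadruplets, lexicographic order: a quadruplet is $\langle rd,\mathit{lvl},\mathit{cfl},\mathit{val}\rangle$ with $rd\in\mathbb{N}$, $\mathit{lvl}\in\{\mathtt{down}<\mathtt{up}\}$, $\mathit{cfl}\in\{\mathtt{false}<\mathtt{true}\}$, $\mathit{val}$ in a totally ordered value set with a least default $\bot$; quadruplets are totally ordered lexicographically. For a nonempty finite set $T$ of quadruplets with lexicographic maximum $\langle r,\ell,c,v\rangle$, $\mathrm{sup}(T)=\langle r,\ell,\mathit{conflict}(T),v\rangle$ where $\mathit{conflict}(T)$ holds iff some element of $T$ of round $r$ has conflict field $\mathtt{true}$, or the elements of $T$ of round $r$ carry at least two distinct values. Model and Algorithm A: $n$ anonymous asynchronous processes (identical code, no identities; any number may crash, a crashed process takes no further steps) share an atomic snapshot object $\mathit{REG}[1..m]$ of multi-writer registers, each initially $\langle 0,\mathtt{down},\mathtt{false},\bot\rangle$, with atomic operations $\mathrm{snapshot}()$ (returns the whole array) and $\mathrm{write}(x,X)$; executions are interleavings of atomic steps. Each process proposes one value $v\neq\bot$ by invoking the following, and decides the value it returns: repeat forever: $\mathit{view}\leftarrow\mathrm{snapshot}()$; then (1) if all entries equal $\langle r,\mathtt{up},\mathtt{false},w\rangle$ with $r>0$, return $w$;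 (2) else if all entries equal $\langle r,\mathtt{down},\mathtt{false},w\rangle$ with $r>0$, write $\langle r+1,\mathtt{up},\mathtt{false},w\rangle$ into $\mathit{REG}[1]$; (3) else if all entries equal $\langle r,\ell,\mathtt{true},w\rangle$ with $r>0$, write $\langle r+1,\mathtt{down},\mathtt{false},w\rangle$ into $\mathit{REG}[1]$; (4) otherwise compute $S=\mathrm{sup}(\{\mathit{view}[1],\dots,\mathit{view}[m],\langle 1,\mathtt{down},\mathtt{false},v\rangle\})$, let $x$ be the smallest index with $\mathit{view}[x]\neq S$, and write $S$ into $\mathit{REG}[x]$. *)

theory Defs
  imports Main "HOL-Library.Product_Lexorder" "HOL-Library.Option_ord"
begin

(* Quadruplet <rd, lvl, cfl, val>.
   lvl : False = down < True = up;  cfl : False < True;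
   val : None = bottom (least), Some v for proper values (v :: 'v :: linorder).
   The product order (Product_Lexorder) is lexicographic; Option_ord makes None least. *)
type_synonym 'v quad = "nat \<times> bool \<times> bool \<times> 'v option"

definition rd :: "'v quad \<Rightarrow> nat" where "rd q = fst q"
definition lvl :: "'v quad \<Rightarrow> bool" where "lvl q = fst (snd q)"
definition cfl :: "'v quad \<Rightarrow> bool" where "cfl q = fst (snd (snd q))"
definition val :: "'v quad \<Rightarrow> 'v option" where "val q = snd (snd (snd q))"

definition conflict :: "('v::linorder) quad set \<Rightarrow> bool" where
  "conflict T = (let r = rd (Max T) in
     (\<exists>q\<in>T. rd q = r \<and> cfl q) \<or>
     (\<exists>q1\<in>T. \<exists>q2\<in>T. rd q1 = r \<and> rd q2 = r \<and> val q1 \<noteq> val q2))"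

definition qsup :: "('v::linorder) quad set \<Rightarrow> 'v quad" where
  "qsup T = (rd (Max T), lvl (Max T), conflict T, val (Max T))"

(* registers REG[1..m] are modelled as indices 0..<m; REG[1] is index 0 *)
type_synonym 'v memory = "nat \<Rightarrow> 'v quad"

datatype 'v pc = Snap | Wr nat "'v quad" | Done "'v option"

definition init_quad :: "'v quad" where "init_quad = (0, False, False, None)"

(* the snapshot step together with the local computation following it *)
definition after_snapshot :: "nat \<Rightarrow> ('v::linorder) \<Rightarrow> 'v memory \<Rightarrow> 'v pc" where
  "after_snapshot m v view =
     (if \<exists>r w. r > 0 \<and> (\<forall>i<m. view i = (r, True, False, w))
      then Done (val (view 0))
      else if \<exists>r w. r > 0 \<and> (\<forall>i<m. view i = (r, False, False, w))
      then Wr 0 (rd (view 0) + 1, True, False, val (view 0))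
      else if \<exists>r l w. r > 0 \<and> (\<forall>i<m. view i = (r, l, True, w))
      then Wr 0 (rd (view 0) + 1, False, False, val (view 0))
      else (let S = qsup (view ` {..<m} \<union> {(1, False, False, Some v)})
            in Wr (LEAST x. x < m \<and> view x \<noteq> S) S))"

fun proc_step :: "nat \<Rightarrow> ('v::linorder) \<Rightarrow> 'v memory \<times> 'v pc \<Rightarrow> 'v memory \<times> 'v pc" where
  "proc_step m v (mem, Snap) = (mem, after_snapshot m v mem)"
| "proc_step m v (mem, Wr x q) = (mem(x := q), Snap)"
| "proc_step m v (mem, Done w) = (mem, Done w)"

type_synonym 'v config = "'v memory \<times> (nat \<Rightarrow> 'v pc)"

definition sys_step :: "nat \<Rightarrow> (nat \<Rightarrow> ('v::linorder)) \<Rightarrow> nat \<Rightarrow> 'v config \<Rightarrow> 'v config" where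
  "sys_step m props p c =
     (let (mem', pc') = proc_step m (props p) (fst c, snd c p) in (mem', (snd c)(p := pc')))"

primrec run :: "nat \<Rightarrow> (nat \<Rightarrow> ('v::linorder)) \<Rightarrow> (nat \<Rightarrow> nat) \<Rightarrow> nat \<Rightarrow> 'v config" where
  "run m props sched 0 = (\<lambda>_. init_quad, \<lambda>_. Snap)"
| "run m props sched (Suc t) = sys_step m props (sched t) (run m props sched t)"

definition decides_at :: "nat \<Rightarrow> (nat \<Rightarrow> ('v::linorder)) \<Rightarrow> (nat \<Rightarrow> nat) \<Rightarrow> nat \<Rightarrow> nat \<Rightarrow> 'v option \<Rightarrow> bool" where
  "decides_at m props sched t p w = (snd (run m props sched t) p = Done w)"

end

theory Submission
  imports Defs
begin


lemma quad_le_iff: "(X::'v::linorder quad) \<le> Y \<longleftrightarrow>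
  rd X < rd Y \<or> rd X = rd Y \<and> (lvl X < lvl Y \<or> lvl X = lvl Y \<and> (cfl X < cfl Y \<or> cfl X = cfl Y \<and> val X \<le> val Y))"
  by (cases X; cases Y) (auto simp: rd_def lvl_def cfl_def val_def less_eq_prod_def less_prod_def)

lemma quad_le_rd: "(X::'v::linorder quad) \<le> Y \<Longrightarrow> rd X \<le> rd Y"
  by (auto simp: quad_le_iff)

lemma quad_lt_rd: "rd X < rd Y \<Longrightarrow> (X::'v::linorder quad) < Y"
  by (metis less_le quad_le_iff nat_less_le)

lemma quad_eq: "(X::'v quad) = (rd X, lvl X, cfl X, val X)"
  by (cases X) (auto simp: rd_def lvl_def cfl_def val_def)

lemma quad_sel[simp]: "rd (a,b,c,d) = a" "lvl (a,b,c,d) = b" "cfl (a,b,c,d) = c" "val (a,b,c,d) = d"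
  by (auto simp: rd_def lvl_def cfl_def val_def)

lemma quad_ext: "rd X = rd Y \<Longrightarrow> lvl X = lvl Y \<Longrightarrow> cfl X = cfl Y \<Longrightarrow> val X = val Y \<Longrightarrow> (X::'v quad) = Y"
  by (cases X; cases Y) simp

definition unif :: "nat \<Rightarrow> 'v memory \<Rightarrow> bool" where
  "unif n V = (0 < rd (V 0) \<and> (\<forall>i<n. V i = V 0))"

lemma after_snapshot_char:
  assumes "0 < m"
  shows "after_snapshot m v V =
    (if unif m V then (if lvl (V 0) \<and> \<not> cfl (V 0) then Done (val (V 0))
       else Wr 0 (rd (V 0) + 1, \<not> lvl (V 0) \<and> \<not> cfl (V 0), False, val (V 0)))
     else (let S = qsup (V ` {..<m} \<union> {(1, False, False, Some v)})
            in Wr (LEAST x. x < m \<and> V x \<noteq> S) S))"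
proof -
  have e1: "(\<exists>r w. r > 0 \<and> (\<forall>i<m. V i = (r, True, False, w))) \<longleftrightarrow> unif m V \<and> lvl (V 0) \<and> \<not> cfl (V 0)"
  proof
    assume "\<exists>r w. r > 0 \<and> (\<forall>i<m. V i = (r, True, False, w))"
    then obtain r w where "r>0" "\<forall>i<m. V i = (r, True, False, w)" by blast
    then have "V 0 = (r, True, False, w)" using assms by blast
    with \<open>r>0\<close> \<open>\<forall>i<m. V i = (r, True, False, w)\<close> show "unif m V \<and> lvl (V 0) \<and> \<not> cfl (V 0)"
      unfolding unif_def by simp
  next
    assume "unif m V \<and> lvl (V 0) \<and> \<not> cfl (V 0)"
    then show "\<exists>r w. r > 0 \<and> (\<forall>i<m. V i = (r, True, False, w))"
      unfolding unif_def by (metis quad_eq)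
  qed
  have e2: "(\<exists>r w. r > 0 \<and> (\<forall>i<m. V i = (r, False, False, w))) \<longleftrightarrow> unif m V \<and> \<not> lvl (V 0) \<and> \<not> cfl (V 0)"
  proof
    assume "\<exists>r w. r > 0 \<and> (\<forall>i<m. V i = (r, False, False, w))"
    then obtain r w where "r>0" "\<forall>i<m. V i = (r, False, False, w)" by blast
    then have "V 0 = (r, False, False, w)" using assms by blast
    with \<open>r>0\<close> \<open>\<forall>i<m. V i = (r, False, False, w)\<close> show "unif m V \<and> \<not> lvl (V 0) \<and> \<not> cfl (V 0)"
      unfolding unif_def by simp
  next
    assume "unif m V \<and> \<not> lvl (V 0) \<and> \<not> cfl (V 0)"
    then show "\<exists>r w. r > 0 \<and> (\<forall>i<m. V i = (r, False, False, w))"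
      unfolding unif_def by (metis quad_eq)
  qed
  have e3: "(\<exists>r l w. r > 0 \<and> (\<forall>i<m. V i = (r, l, True, w))) \<longleftrightarrow> unif m V \<and> cfl (V 0)"
  proof
    assume "\<exists>r l w. r > 0 \<and> (\<forall>i<m. V i = (r, l, True, w))"
    then obtain r l w where "r>0" "\<forall>i<m. V i = (r, l, True, w)" by blast
    then have "V 0 = (r, l, True, w)" using assms by blast
    with \<open>r>0\<close> \<open>\<forall>i<m. V i = (r, l, True, w)\<close> show "unif m V \<and> cfl (V 0)"
      unfolding unif_def by simp
  next
    assume "unif m V \<and> cfl (V 0)"
    then show "\<exists>r l w. r > 0 \<and> (\<forall>i<m. V i = (r, l, True, w))"
      unfolding unif_def by (metis quad_eq)
  qed
  show ?thesis unfolding after_snapshot_def e1 e2 e3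
    by (cases "unif m V"; cases "lvl (V 0)"; cases "cfl (V 0)"; simp only: if_True if_False simp_thms)
qed

lemma qsup_sel[simp]: "rd (qsup T) = rd (Max T)" "lvl (qsup T) = lvl (Max T)" "val (qsup T) = val (Max T)"
  "cfl (qsup T) = conflict T"
  by (simp_all add: qsup_def)

lemma conflict_cfl: "finite T \<Longrightarrow> q \<in> T \<Longrightarrow> rd q = rd (Max T) \<Longrightarrow> cfl q \<Longrightarrow> conflict T"
  unfolding conflict_def Let_def by blast

lemma conflict_val: "q1 \<in> T \<Longrightarrow> q2 \<in> T \<Longrightarrow> rd q1 = rd (Max T) \<Longrightarrow> rd q2 = rd (Max T)
   \<Longrightarrow> val q1 \<noteq> val q2 \<Longrightarrow> conflict T"
  unfolding conflict_def Let_def by blast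

lemma Max_le_qsup: assumes "finite T" "T \<noteq> {}" shows "Max T \<le> (qsup T :: 'v::linorder quad)"
proof -
  have "cfl (Max T) \<Longrightarrow> conflict T" using assms by (intro conflict_cfl[of T "Max T"]) auto
  then have "cfl (Max T) < cfl (qsup T) \<or> cfl (Max T) = cfl (qsup T)"
    by (cases "cfl (Max T)"; cases "conflict T") (simp_all add: less_bool_def)
  then show ?thesis unfolding quad_le_iff by (simp only: qsup_sel) simp
qed

lemma qsup_ge: assumes "finite T" "q \<in> T" shows "q \<le> (qsup T :: 'v::linorder quad)"
  using Max_le_qsup[of T] assms Max_ge[of T q] by force

lemma no_conflict: assumes "\<not> conflict T" "q \<in> T" "rd q = rd (Max T)" "finite T"
  shows "\<not> cfl q \<and> val q = val (Max T)"
proof (intro conjI)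
  note a = assms
  from a have ne: "T \<noteq> {}" by auto
  show "\<not> cfl q" using a conflict_cfl by blast
  show "val q = val (Max T)" using a conflict_val[OF a(2) Max_in[OF a(4) ne] a(3) refl] by blast
qed

definition good :: "'v::linorder quad \<Rightarrow> 'v quad \<Rightarrow> bool" where
  "good X Y = (X \<le> Y \<and> (rd Y = rd X \<longrightarrow> val Y = val X \<or> cfl Y))"

lemma good_refl: "good X X" by (simp add: good_def)

lemma good_rd: "rd X < rd Y \<Longrightarrow> good X Y"
  unfolding good_def using quad_lt_rd[of X Y] by auto

lemma closure_good:
  assumes n: "0 < n" and i: "i < n" and g: "good X (V i)" and a: "after_snapshot n v V = Wr x Y"
  shows "good X Y"
proof (cases "unif n V")
  case True
  then have "V i = V 0" using i unfolding unif_def by blast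
  then have "X \<le> V 0" using g unfolding good_def by simp
  then have "rd X < rd (V 0) + 1" using quad_le_rd[of X "V 0"] by simp
  moreover have "Y = (rd (V 0) + 1, \<not> lvl (V 0) \<and> \<not> cfl (V 0), False, val (V 0))"
  proof -
    have "after_snapshot n v V = (if lvl (V 0) \<and> \<not> cfl (V 0) then Done (val (V 0))
       else Wr 0 (rd (V 0) + 1, \<not> lvl (V 0) \<and> \<not> cfl (V 0), False, val (V 0)))"
      using True by (simp only: after_snapshot_char[OF n] if_True)
    then show ?thesis using a by (cases "lvl (V 0) \<and> \<not> cfl (V 0)") simp_all
  qed
  ultimately show ?thesis using good_rd[of X Y] by simp
next
  case False
  define T where "T = V ` {..<n} \<union> {(1, False, False, Some v)}"
  have "after_snapshot n v V = Wr (LEAST x. x < n \<and> V x \<noteq> qsup T) (qsup T)"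
    using False by (simp only: after_snapshot_char[OF n] if_False Let_def T_def)
  then have Y: "Y = qsup T" using a by simp
  have fin: "finite T" "T \<noteq> {}" unfolding T_def by simp_all
  have qT: "V i \<in> T" using i unfolding T_def by simp
  have XV: "X \<le> V i" using g unfolding good_def by simp
  have VM: "V i \<le> Max T" using Max_ge[OF fin(1) qT] .
  have "V i \<le> Y" using qsup_ge[OF fin(1) qT] Y by simp
  then have XY: "X \<le> Y" using XV by (rule order_trans[rotated])
  show ?thesis unfolding good_def
  proof (intro conjI XY impI)
    assume r: "rd Y = rd X"
    have "rd X \<le> rd (V i)" using XV quad_le_rd by blast
    moreover have "rd (V i) \<le> rd (Max T)" using VM quad_le_rd by blast
    ultimately have ri: "rd (V i) = rd (Max T)" using r Y by simp
    have "val (V i) = val X \<or> cfl (V i)" using g r ri Y unfolding good_def by simp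
    then show "val Y = val X \<or> cfl Y"
    proof
      assume "cfl (V i)" then have "conflict T" using conflict_cfl[OF fin(1) qT ri] by simp
      then show ?thesis using Y by simp
    next
      assume vx: "val (V i) = val X"
      show ?thesis
      proof (cases "val (Max T) = val X")
        case True then show ?thesis using Y by simp
      next
        case False
        then have "conflict T" using conflict_val[OF qT Max_in[OF fin] ri refl] vx by simp
        then show ?thesis using Y by simp
      qed
    qed
  qed
qed

lemma card_lt_ex: "card {i. i < (n::nat) \<and> P i} < n \<Longrightarrow> \<exists>i<n. \<not> P i"
proof (rule ccontr)
  assume "card {i. i < n \<and> P i} < n" "\<not> (\<exists>i<n. \<not> P i)"
  then have "{i. i < n \<and> P i} = {..<n}" by auto
  then show False using \<open>card {i. i < n \<and> P i} < n\<close> by simp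
qed

locale sys =
  fixes n :: nat and props :: "nat \<Rightarrow> 'v::linorder" and sched :: "nat \<Rightarrow> nat"
  assumes sched_lt: "\<forall>t. sched t < n"
begin

definition mem :: "nat \<Rightarrow> 'v memory" where "mem t = fst (run n props sched t)"
definition pcs :: "nat \<Rightarrow> nat \<Rightarrow> 'v pc" where "pcs t = snd (run n props sched t)"

lemma n_pos: "0 < n" using sched_lt by (metis gr_zeroI not_less0)

lemma sched_lt': "sched t < n" using sched_lt by blast

lemma mem0: "mem 0 = (\<lambda>_. init_quad)" and pcs0: "pcs 0 = (\<lambda>_. Snap)"
  by (simp_all add: mem_def pcs_def)

lemma step_Snap: assumes "pcs t (sched t) = Snap"
  shows "mem (Suc t) = mem t" "pcs (Suc t) = (pcs t)(sched t := after_snapshot n (props (sched t)) (mem t))"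
  using assms by (simp_all add: mem_def pcs_def sys_step_def split: prod.split)

lemma step_Wr: assumes "pcs t (sched t) = Wr x Y"
  shows "mem (Suc t) = (mem t)(x := Y)" "pcs (Suc t) = (pcs t)(sched t := Snap)"
  using assms by (simp_all add: mem_def pcs_def sys_step_def split: prod.split)

lemma step_Done: assumes "pcs t (sched t) = Done w"
  shows "mem (Suc t) = mem t" "pcs (Suc t) = pcs t"
  using assms by (simp_all add: mem_def pcs_def sys_step_def fun_upd_idem split: prod.split)

lemma step_other: "q \<noteq> sched t \<Longrightarrow> pcs (Suc t) q = pcs t q"
  by (cases "pcs t (sched t)") (simp_all add: step_Snap step_Wr step_Done)

definition Unif :: "nat \<Rightarrow> bool" where "Unif t = (pcs t (sched t) = Snap \<and> unif n (mem t))"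
definition U :: "nat \<Rightarrow> 'v quad" where "U t = mem t 0"

definition badR where "badR X t = {i. i < n \<and> \<not> good X (mem t i)}"
definition badP where "badP X t = {q. q < n \<and> (\<exists>x Y. pcs t q = Wr x Y \<and> \<not> good X Y)}"

lemma badP_sub: "badP X t \<subseteq> {..<n}" unfolding badP_def by auto
lemma badR_sub: "badR X t \<subseteq> {..<n}" unfolding badR_def by auto

lemma bad_step:
  assumes ex: "\<exists>i<n. good X (mem t i)"
  shows "card (badR X (Suc t)) + card (badP X (Suc t)) \<le> card (badR X t) + card (badP X t)"
proof -
  define p where "p = sched t"
  have fR: "finite (badR X t')" "finite (badP X t')" for t'
    by (rule finite_subset[OF badR_sub], simp) (rule finite_subset[OF badP_sub], simp)
  have oth: "q \<noteq> p \<Longrightarrow> pcs (Suc t) q = pcs t q" for q using step_other[of q t] p_def by simp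
  show ?thesis
  proof (cases "pcs t p")
    case Snap
    note st = step_Snap[OF Snap[unfolded p_def]]
    have "badR X (Suc t) = badR X t" unfolding badR_def st(1) ..
    moreover have "badP X (Suc t) \<subseteq> badP X t"
    proof
      fix q assume q: "q \<in> badP X (Suc t)"
      then obtain x Y where xy: "q < n" "pcs (Suc t) q = Wr x Y" "\<not> good X Y" unfolding badP_def by blast
      show "q \<in> badP X t"
      proof (cases "q = p")
        case True
        have "pcs (Suc t) p = after_snapshot n (props p) (mem t)" using st(2) p_def by simp
        then have "after_snapshot n (props p) (mem t) = Wr x Y" using xy True by simp
        then have "good X Y" using ex closure_good[OF n_pos] by blast
        then show ?thesis using xy by blast
      next
        case False
        then have "pcs t q = Wr x Y" using xy oth by simp
        then show ?thesis using xy unfolding badP_def by blast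
      qed
    qed
    then have "card (badP X (Suc t)) \<le> card (badP X t)" using fR card_mono by blast
    ultimately show ?thesis by simp
  next
    case (Wr x Y)
    note st = step_Wr[OF Wr[unfolded p_def]]
    have pS: "pcs (Suc t) p = Snap" using st(2) p_def by simp
    have P: "badP X (Suc t) = badP X t - {p}"
    proof (intro set_eqI iffI)
      fix q assume "q \<in> badP X (Suc t)"
      then obtain x' Y' where xy: "q < n" "pcs (Suc t) q = Wr x' Y'" "\<not> good X Y'" unfolding badP_def by blast
      then have "q \<noteq> p" using pS by auto
      then have "pcs t q = Wr x' Y'" using xy oth by simp
      then show "q \<in> badP X t - {p}" using xy \<open>q \<noteq> p\<close> unfolding badP_def by blast
    next
      fix q assume "q \<in> badP X t - {p}"
      then obtain x' Y' where xy: "q < n" "pcs t q = Wr x' Y'" "\<not> good X Y'" "q \<noteq> p" unfolding badP_def by blast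
      then have "pcs (Suc t) q = Wr x' Y'" using oth by simp
      then show "q \<in> badP X (Suc t)" using xy unfolding badP_def by blast
    qed
    show ?thesis
    proof (cases "good X Y")
      case True
      have "badR X (Suc t) \<subseteq> badR X t" unfolding badR_def st(1) using True by auto
      then have "card (badR X (Suc t)) \<le> card (badR X t)" using fR card_mono by blast
      moreover have "card (badP X (Suc t)) \<le> card (badP X t)" unfolding P using fR by (simp add: card_Diff1_le)
      ultimately show ?thesis by simp
    next
      case False
      have "badR X (Suc t) \<subseteq> insert x (badR X t)" unfolding badR_def st(1) by auto
      then have "card (badR X (Suc t)) \<le> card (insert x (badR X t))" by (rule card_mono[rotated]) (simp add: fR)
      also have "\<dots> \<le> Suc (card (badR X t))" by (simp add: card_insert_if fR)
      finally have r: "card (badR X (Suc t)) \<le> Suc (card (badR X t))" .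
      have "p < n" using p_def sched_lt' by simp
      then have "p \<in> badP X t" unfolding badP_def using Wr False by blast
      then have "Suc (card (badP X (Suc t))) = card (badP X t)" unfolding P
        by (rule card_Suc_Diff1[OF fR(2)])
      then show ?thesis using r by simp
    qed
  next
    case (Done w)
    note st = step_Done[OF Done[unfolded p_def]]
    show ?thesis unfolding badR_def badP_def st by simp
  qed
qed

lemma unif_all: "unif n V \<Longrightarrow> i < n \<Longrightarrow> V i = V 0"
  unfolding unif_def by blast

lemma bad_bound:
  assumes u: "Unif t1"
  shows "t1 < t \<Longrightarrow> card (badR (U t1) t) + card (badP (U t1) t) < n"
proof (induction t)
  case 0 then show ?case by simp
next
  case (Suc t)
  define X where "X = U t1"
  show ?case
  proof (cases "t = t1")
    case True
    define p where "p = sched t1"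
    have snap: "pcs t1 p = Snap" using u unfolding Unif_def p_def by simp
    note st = step_Snap[OF snap[unfolded p_def]]
    have un: "unif n (mem t1)" using u unfolding Unif_def by simp
    have "badR X (Suc t1) = {}"
    proof -
      have "good X (mem (Suc t1) i)" if "i < n" for i
        using unif_all[OF un that] st(1) good_refl[of X] unfolding X_def U_def by simp
      then show ?thesis unfolding badR_def by blast
    qed
    moreover have "badP X (Suc t1) \<subseteq> {..<n} - {p}"
    proof
      fix q assume q: "q \<in> badP X (Suc t1)"
      then obtain x Y where xy: "q < n" "pcs (Suc t1) q = Wr x Y" "\<not> good X Y" unfolding badP_def by blast
      have "q \<noteq> p"
      proof
        assume "q = p"
        then have a: "after_snapshot n (props p) (mem t1) = Wr x Y" using xy st p_def by simp
        have "after_snapshot n (props p) (mem t1) = (if lvl (mem t1 0) \<and> \<not> cfl (mem t1 0) then Done (val (mem t1 0))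
          else Wr 0 (rd (mem t1 0) + 1, \<not> lvl (mem t1 0) \<and> \<not> cfl (mem t1 0), False, val (mem t1 0)))"
          using un by (simp only: after_snapshot_char[OF n_pos] if_True)
        then have "Y = (rd (mem t1 0) + 1, \<not> lvl (mem t1 0) \<and> \<not> cfl (mem t1 0), False, val (mem t1 0))"
          using a by (cases "lvl (mem t1 0) \<and> \<not> cfl (mem t1 0)") simp_all
        then have "good X Y" using good_rd[of X Y] unfolding X_def U_def by simp
        then show False using xy by simp
      qed
      then show "q \<in> {..<n} - {p}" using xy by simp
    qed
    then have "card (badP X (Suc t1)) \<le> card ({..<n} - {p})" by (simp add: card_mono)
    moreover have "card ({..<n} - {p}) < n" using p_def sched_lt' n_pos by simp
    ultimately show ?thesis using True X_def by simp
  next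
    case False
    then have lt: "t1 < t" using Suc by simp
    then have IH: "card (badR X t) + card (badP X t) < n" using Suc X_def by simp
    then have "card (badR X t) < n" by simp
    then have "\<exists>i<n. good X (mem t i)" using card_lt_ex[of n "\<lambda>i. \<not> good X (mem t i)"]
      unfolding badR_def by simp
    then show ?thesis using bad_step[of X t] IH X_def by simp
  qed
qed

lemma UNI: assumes "Unif t1" "Unif t2" "t1 \<le> t2" shows "good (U t1) (U t2)"
proof (cases "t1 = t2")
  case True then show ?thesis by (simp add: good_refl)
next
  case False
  then have "card (badR (U t1) t2) < n" using bad_bound[OF assms(1), of t2] assms by simp
  then obtain i where i: "i < n" "good (U t1) (mem t2 i)"
    using card_lt_ex[of n "\<lambda>i. \<not> good (U t1) (mem t2 i)"] unfolding badR_def by auto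
  have "mem t2 i = mem t2 0" using assms(2) i(1) unif_all unfolding Unif_def by blast
  then show ?thesis using i U_def by simp
qed

end



context sys begin

definition Orig :: "nat \<Rightarrow> 'v quad \<Rightarrow> bool" where
  "Orig t Y = ((0 < rd Y \<longrightarrow> (\<exists>q<n. val Y = Some (props q))) \<and> (lvl Y \<longrightarrow> 2 \<le> rd Y) \<and>
     (2 \<le> rd Y \<longrightarrow> (\<exists>t'<t. Unif t' \<and> rd (U t') + 1 = rd Y \<and> val (U t') = val Y \<and>
         (lvl Y \<longrightarrow> \<not> lvl (U t') \<and> \<not> cfl (U t')))))"

lemma ex_less_mono: assumes "\<exists>s<t. P s" "t \<le> (t'::nat)" shows "\<exists>s<t'. P s"
proof -
  obtain s where "s < t" "P s" using assms(1) by blast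
  then show ?thesis using assms(2) by (intro exI[of _ s]) simp
qed

lemma Orig_mono: assumes a: "Orig t Y" "t \<le> t'" shows "Orig t' Y"
proof -
  let ?P = "\<lambda>s. Unif s \<and> rd (U s) + 1 = rd Y \<and> val (U s) = val Y \<and>
         (lvl Y \<longrightarrow> \<not> lvl (U s) \<and> \<not> cfl (U s))"
  have h: "(0 < rd Y \<longrightarrow> (\<exists>q<n. val Y = Some (props q))) \<and> (lvl Y \<longrightarrow> 2 \<le> rd Y)"
    "2 \<le> rd Y \<longrightarrow> (\<exists>s<t. ?P s)" using a(1) unfolding Orig_def by simp_all
  have "2 \<le> rd Y \<longrightarrow> (\<exists>s<t'. ?P s)" using h(2) ex_less_mono[of t ?P t'] a(2) by simp
  then show ?thesis using h(1) unfolding Orig_def by simp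
qed

lemma Orig_cong: "Orig t Y \<Longrightarrow> rd Y' = rd Y \<Longrightarrow> lvl Y' = lvl Y \<Longrightarrow> val Y' = val Y \<Longrightarrow> Orig t Y'"
  unfolding Orig_def by simp

definition Inv :: "nat \<Rightarrow> bool" where
  "Inv t = ((\<forall>i. Orig t (mem t i)) \<and> (\<forall>q x Y. pcs t q = Wr x Y \<longrightarrow> Orig t Y) \<and>
     (\<forall>q w. pcs t q = Done w \<longrightarrow> (\<exists>t'<t. Unif t' \<and> lvl (U t') \<and> \<not> cfl (U t') \<and> val (U t') = w)))"

lemma Inv0: "Inv 0"
  unfolding Inv_def Orig_def by (simp add: mem0 pcs0 init_quad_def)

lemma Inv_step: assumes I: "Inv t" shows "Inv (Suc t)"
proof -
  define p where "p = sched t"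
  have pn: "p < n" using p_def sched_lt' by simp
  have Im: "Orig t (mem t i)" for i using I unfolding Inv_def by blast
  have Iw: "pcs t q = Wr x Y \<Longrightarrow> Orig t Y" for q x Y using I unfolding Inv_def by blast
  have Id: "pcs t q = Done w \<Longrightarrow> (\<exists>t'<t. Unif t' \<and> lvl (U t') \<and> \<not> cfl (U t') \<and> val (U t') = w)" for q w
    using I unfolding Inv_def by blast
  have oth: "q \<noteq> p \<Longrightarrow> pcs (Suc t) q = pcs t q" for q using step_other[of q t] p_def by simp
  have OS: "Orig t Y \<Longrightarrow> Orig (Suc t) Y" for Y by (erule Orig_mono) simp
  have IdS: "pcs t q = Done w \<Longrightarrow> (\<exists>t'<Suc t. Unif t' \<and> lvl (U t') \<and> \<not> cfl (U t') \<and> val (U t') = w)" for q w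
  proof -
    assume "pcs t q = Done w"
    then obtain t' where "t' < t" "Unif t' \<and> lvl (U t') \<and> \<not> cfl (U t') \<and> val (U t') = w" using Id by blast
    then show ?thesis by (intro exI[of _ t']) simp
  qed
  show ?thesis
  proof (cases "pcs t p")
    case Snap
    note st = step_Snap[OF Snap[unfolded p_def]]
    define a where "a = after_snapshot n (props p) (mem t)"
    have pa: "pcs (Suc t) p = a" using st(2) p_def a_def by simp
    have newa: "(\<forall>x Y. a = Wr x Y \<longrightarrow> Orig (Suc t) Y) \<and>
      (\<forall>w. a = Done w \<longrightarrow> (\<exists>t'<Suc t. Unif t' \<and> lvl (U t') \<and> \<not> cfl (U t') \<and> val (U t') = w))"
    proof (cases "unif n (mem t)")
      case True
      have ut: "Unif t" unfolding Unif_def using Snap True p_def by simp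
      have ae: "a = (if lvl (mem t 0) \<and> \<not> cfl (mem t 0) then Done (val (mem t 0))
          else Wr 0 (rd (mem t 0) + 1, \<not> lvl (mem t 0) \<and> \<not> cfl (mem t 0), False, val (mem t 0)))"
        unfolding a_def using True by (simp only: after_snapshot_char[OF n_pos] if_True)
      have r0: "0 < rd (mem t 0)" using True unfolding unif_def by simp
      have o0: "Orig t (mem t 0)" by (rule Im)
      have vq: "\<exists>q<n. val (mem t 0) = Some (props q)" using o0 r0 unfolding Orig_def by blast
      have "Orig (Suc t) (rd (mem t 0) + 1, \<not> lvl (mem t 0) \<and> \<not> cfl (mem t 0), False, val (mem t 0))"
        unfolding Orig_def quad_sel
      proof (intro conjI impI)
        show "\<exists>q<n. val (mem t 0) = Some (props q)" by (rule vq)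
        show "2 \<le> rd (mem t 0) + 1" using r0 by simp
        show "\<exists>t'<Suc t. Unif t' \<and> rd (U t') + 1 = rd (mem t 0) + 1 \<and> val (U t') = val (mem t 0) \<and>
           ((\<not> lvl (mem t 0) \<and> \<not> cfl (mem t 0)) \<longrightarrow> \<not> lvl (U t') \<and> \<not> cfl (U t'))"
          using ut unfolding U_def by blast
      qed
      then show ?thesis
      proof (intro conjI allI impI)
        fix x Y assume "a = Wr x Y"
        then have "Y = (rd (mem t 0) + 1, \<not> lvl (mem t 0) \<and> \<not> cfl (mem t 0), False, val (mem t 0))"
          using ae by (cases "lvl (mem t 0) \<and> \<not> cfl (mem t 0)") simp_all
        then show "Orig (Suc t) Y" using \<open>Orig (Suc t) _\<close> by simp
      next
        fix w assume "a = Done w"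
        then have "lvl (mem t 0) \<and> \<not> cfl (mem t 0) \<and> w = val (mem t 0)"
          using ae by (cases "lvl (mem t 0) \<and> \<not> cfl (mem t 0)") simp_all
        then show "\<exists>t'<Suc t. Unif t' \<and> lvl (U t') \<and> \<not> cfl (U t') \<and> val (U t') = w"
          using ut unfolding U_def by blast
      qed
    next
      case False
      define T where "T = mem t ` {..<n} \<union> {(1, False, False, Some (props p))}"
      have ae: "a = Wr (LEAST x. x < n \<and> mem t x \<noteq> qsup T) (qsup T)"
        unfolding a_def using False by (simp only: after_snapshot_char[OF n_pos] if_False Let_def T_def)
      have fin: "finite T" "T \<noteq> {}" unfolding T_def by simp_all
      have "Max T \<in> T" using Max_in[OF fin] .
      then have "Orig t (Max T)"
      proof (cases "Max T = (1, False, False, Some (props p))")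
        case True then show ?thesis unfolding Orig_def using pn by simp blast
      next
        case False then have "Max T \<in> mem t ` {..<n}" using \<open>Max T \<in> T\<close> unfolding T_def by blast
        then obtain i where "Max T = mem t i" by blast
        then show ?thesis using Im[of i] by simp
      qed
      then have "Orig t (qsup T)" by (rule Orig_cong) simp_all
      then have "Orig (Suc t) (qsup T)" by (rule OS)
      then show ?thesis
      proof (intro conjI allI impI)
        fix x Y assume "a = Wr x Y"
        then have "Y = qsup T" using ae by simp
        then show "Orig (Suc t) Y" using \<open>Orig (Suc t) (qsup T)\<close> by simp
      next
        fix w assume "a = Done w" then show "\<exists>t'<Suc t. Unif t' \<and> lvl (U t') \<and> \<not> cfl (U t') \<and> val (U t') = w"
          using ae by simp
      qed
    qed
    show ?thesis unfolding Inv_def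
    proof (intro conjI allI impI)
      fix i show "Orig (Suc t) (mem (Suc t) i)" unfolding st(1) by (rule OS[OF Im])
    next
      fix q x Y assume "pcs (Suc t) q = Wr x Y"
      then show "Orig (Suc t) Y"
      proof (cases "q = p")
        case True then have "a = Wr x Y" using pa \<open>pcs (Suc t) q = Wr x Y\<close> by simp
        then show ?thesis using newa by blast
      next
        case False then have "pcs t q = Wr x Y" using oth \<open>pcs (Suc t) q = Wr x Y\<close> by simp
        then show ?thesis by (rule OS[OF Iw])
      qed
    next
      fix q w assume "pcs (Suc t) q = Done w"
      then show "\<exists>t'<Suc t. Unif t' \<and> lvl (U t') \<and> \<not> cfl (U t') \<and> val (U t') = w"
      proof (cases "q = p")
        case True then have "a = Done w" using pa \<open>pcs (Suc t) q = Done w\<close> by simp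
        then show ?thesis using newa by blast
      next
        case False then have "pcs t q = Done w" using oth \<open>pcs (Suc t) q = Done w\<close> by simp
        then show ?thesis by (rule IdS)
      qed
    qed
  next
    case (Wr x Y)
    note st = step_Wr[OF Wr[unfolded p_def]]
    have oY: "Orig t Y" using Iw Wr by blast
    show ?thesis unfolding Inv_def
    proof (intro conjI allI impI)
      fix i have "Orig t (mem (Suc t) i)" unfolding st(1) using Im[of i] oY by simp
      then show "Orig (Suc t) (mem (Suc t) i)" by (rule OS)
    next
      fix q x' Y' assume a: "pcs (Suc t) q = Wr x' Y'"
      have "q \<noteq> p" using a st(2) p_def by auto
      then have "pcs t q = Wr x' Y'" using a oth by simp
      then show "Orig (Suc t) Y'" by (rule OS[OF Iw])
    next
      fix q w assume a: "pcs (Suc t) q = Done w"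
      have "q \<noteq> p" using a st(2) p_def by auto
      then have "pcs t q = Done w" using oth a by simp
      then show "\<exists>t'<Suc t. Unif t' \<and> lvl (U t') \<and> \<not> cfl (U t') \<and> val (U t') = w" by (rule IdS)
    qed
  next
    case (Done w)
    note st = step_Done[OF Done[unfolded p_def]]
    show ?thesis unfolding Inv_def st
    proof (intro conjI allI impI)
      fix i show "Orig (Suc t) (mem t i)" by (rule OS[OF Im])
    next
      fix q x' Y' assume "pcs t q = Wr x' Y'"
      then show "Orig (Suc t) Y'" by (rule OS[OF Iw])
    next
      fix q w assume "pcs t q = Done w"
      then show "\<exists>t'<Suc t. Unif t' \<and> lvl (U t') \<and> \<not> cfl (U t') \<and> val (U t') = w" by (rule IdS)
    qed
  qed
qed

lemma Inv_all: "Inv t"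
  by (induction t) (simp_all add: Inv0 Inv_step)

end


context sys begin

lemma Orig_mem: "Orig t (mem t i)" using Inv_all[of t] unfolding Inv_def by blast

lemma Done_dec: "pcs t q = Done w \<Longrightarrow> \<exists>t'<t. Unif t' \<and> lvl (U t') \<and> \<not> cfl (U t') \<and> val (U t') = w"
  using Inv_all[of t] unfolding Inv_def by blast

lemma Unif_rd: "Unif t \<Longrightarrow> 0 < rd (U t)" by (simp add: Unif_def unif_def U_def)

lemma orig_rd2: assumes "Unif t" "2 \<le> rd (U t)"
  shows "\<exists>t'<t. Unif t' \<and> rd (U t') + 1 = rd (U t) \<and> val (U t') = val (U t) \<and>
     (lvl (U t) \<longrightarrow> \<not> lvl (U t') \<and> \<not> cfl (U t'))"
  using Orig_mem[of t 0] assms(2) unfolding Orig_def U_def by blast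

lemma orig_up: assumes "Unif t" "lvl (U t)"
  shows "\<exists>t'<t. Unif t' \<and> rd (U t') + 1 = rd (U t) \<and> val (U t') = val (U t) \<and> \<not> lvl (U t') \<and> \<not> cfl (U t')"
proof -
  have "2 \<le> rd (U t)" using Orig_mem[of t 0] assms(2) unfolding Orig_def U_def by blast
  then show ?thesis using orig_rd2[OF assms(1)] assms(2) by blast
qed

lemma down_unique: assumes "Unif t1" "Unif t2" "rd (U t1) = rd (U t2)" "\<not> cfl (U t1)" "\<not> cfl (U t2)"
  shows "val (U t1) = val (U t2)"
proof (cases "t1 \<le> t2")
  case True
  then have "good (U t1) (U t2)" using UNI assms by blast
  then show ?thesis using assms unfolding good_def by simp
next
  case False
  then have "good (U t2) (U t1)" using UNI assms by simp
  then show ?thesis using assms unfolding good_def by simp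
qed

lemma same_round: assumes d: "Unif t0" "lvl (U t0)" "\<not> cfl (U t0)" and u: "Unif t" "rd (U t) = rd (U t0)"
  shows "val (U t) = val (U t0)"
proof (cases "t \<le> t0")
  case True
  then have "good (U t) (U t0)" using UNI d u by blast
  then show ?thesis using d u unfolding good_def by simp
next
  case False
  then have g: "good (U t0) (U t)" using UNI d u by simp
  then have "U t0 \<le> U t" unfolding good_def by simp
  then have lv: "lvl (U t)" using d(2) u(2) unfolding quad_le_iff by (auto simp: less_bool_def)
  show ?thesis
  proof (cases "cfl (U t)")
    case False then show ?thesis using g u unfolding good_def by simp
  next
    case True
    obtain t3 where t3: "Unif t3" "rd (U t3) + 1 = rd (U t)" "val (U t3) = val (U t)" "\<not> cfl (U t3)"
      using orig_up[OF u(1) lv] by blast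
    obtain t4 where t4: "Unif t4" "rd (U t4) + 1 = rd (U t0)" "val (U t4) = val (U t0)" "\<not> cfl (U t4)"
      using orig_up[OF d(1) d(2)] by blast
    have "val (U t3) = val (U t4)" using down_unique[OF t3(1) t4(1)] t3 t4 u(2) by simp
    then show ?thesis using t3 t4 by simp
  qed
qed

lemma higher_round: assumes d: "Unif t0" "lvl (U t0)" "\<not> cfl (U t0)"
  shows "Unif t \<Longrightarrow> rd (U t) = rd (U t0) + k \<Longrightarrow> val (U t) = val (U t0)"
proof (induction k arbitrary: t)
  case 0 then show ?case using same_round[OF d] by simp
next
  case (Suc k)
  have "2 \<le> rd (U t)" using Suc.prems Unif_rd[OF d(1)] by simp
  then obtain t' where "Unif t'" "rd (U t') + 1 = rd (U t)" "val (U t') = val (U t)"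
    using orig_rd2[OF Suc.prems(1)] by blast
  then show ?case using Suc.IH[of t'] Suc.prems by simp
qed

lemma agreement: assumes "pcs t p = Done w" "pcs t' q = Done w'" shows "w = w'"
proof -
  obtain t1 where t1: "Unif t1" "lvl (U t1)" "\<not> cfl (U t1)" "val (U t1) = w" using Done_dec[OF assms(1)] by blast
  obtain t2 where t2: "Unif t2" "lvl (U t2)" "\<not> cfl (U t2)" "val (U t2) = w'" using Done_dec[OF assms(2)] by blast
  show ?thesis
  proof (cases "rd (U t1) \<le> rd (U t2)")
    case True
    then have "rd (U t2) = rd (U t1) + (rd (U t2) - rd (U t1))" by simp
    then have "val (U t2) = val (U t1)" using higher_round[OF t1(1-3) t2(1)] by blast
    then show ?thesis using t1 t2 by simp
  next
    case False
    then have "rd (U t1) = rd (U t2) + (rd (U t1) - rd (U t2))" by simp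
    then have "val (U t1) = val (U t2)" using higher_round[OF t2(1-3) t1(1)] by blast
    then show ?thesis using t1 t2 by simp
  qed
qed

lemma validity: assumes "pcs t p = Done w" shows "\<exists>q<n. w = Some (props q)"
proof -
  obtain t1 where t1: "Unif t1" "val (U t1) = w" using Done_dec[OF assms] by blast
  have "0 < rd (U t1)" using Unif_rd[OF t1(1)] .
  then show ?thesis using Orig_mem[of t1 0] t1(2) unfolding Orig_def U_def by auto
qed

end


context sys begin

definition own :: "nat \<Rightarrow> 'v quad" where "own p = (1, False, False, Some (props p))"

definition FillV :: "nat \<Rightarrow> 'v memory \<Rightarrow> 'v quad \<Rightarrow> bool" where
  "FillV p V S = ((\<forall>i<n. V i \<le> S) \<and> own p \<le> S \<and> (\<exists>i<n. V i = S) \<and> 0 < rd S \<and>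
     (\<not> cfl S \<longrightarrow> (\<forall>i<n. rd (V i) = rd S \<longrightarrow> \<not> cfl (V i) \<and> val (V i) = val S) \<and>
        (rd S = 1 \<longrightarrow> Some (props p) = val S)))"

definition stage :: "'v quad \<Rightarrow> nat" where
  "stage S = (if cfl S then 2 else if lvl S then 0 else 1)"

definition phi :: "'v quad \<Rightarrow> 'v memory \<Rightarrow> nat" where
  "phi S V = card {i. i < n \<and> V i \<noteq> S} + n * stage S"

lemma fill_qsup: assumes F: "FillV p V S"
  shows "qsup (V ` {..<n} \<union> {own p}) = S"
proof -
  define T where "T = V ` {..<n} \<union> {own p}"
  have fin: "finite T" "T \<noteq> {}" unfolding T_def by simp_all
  obtain i0 where i0: "i0 < n" "V i0 = S" using F unfolding FillV_def by blast
  have ST: "S \<in> T" unfolding T_def using i0 by force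
  have le: "y \<le> S" if "y \<in> T" for y
  proof -
    from that have "y = own p \<or> (\<exists>i<n. y = V i)" unfolding T_def by blast
    then show ?thesis using F unfolding FillV_def by blast
  qed
  have M: "Max T = S" by (rule Max_eqI[OF fin(1) le ST])
  have c: "conflict T = cfl S"
  proof (cases "cfl S")
    case True
    then show ?thesis using conflict_cfl[OF fin(1) ST] M by simp
  next
    case False
    have F2: "\<forall>i<n. rd (V i) = rd S \<longrightarrow> \<not> cfl (V i) \<and> val (V i) = val S" "rd S = 1 \<longrightarrow> Some (props p) = val S"
      using F False unfolding FillV_def by blast+
    have q: "\<not> cfl q \<and> val q = val S" if "q \<in> T" "rd q = rd S" for q
    proof -
      from that(1) have "q = own p \<or> (\<exists>i<n. q = V i)" unfolding T_def by blast
      then show ?thesis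
      proof
        assume "q = own p" then show ?thesis using that(2) F2(2) unfolding own_def by simp
      next
        assume "\<exists>i<n. q = V i" then show ?thesis using that(2) F2(1) by blast
      qed
    qed
    have n1: "\<not> (\<exists>q\<in>T. rd q = rd S \<and> cfl q)" using q by blast
    have n2: "\<not> (\<exists>q1\<in>T. \<exists>q2\<in>T. rd q1 = rd S \<and> rd q2 = rd S \<and> val q1 \<noteq> val q2)"
    proof
      assume "\<exists>q1\<in>T. \<exists>q2\<in>T. rd q1 = rd S \<and> rd q2 = rd S \<and> val q1 \<noteq> val q2"
      then obtain q1 q2 where "q1 \<in> T" "q2 \<in> T" "rd q1 = rd S" "rd q2 = rd S" "val q1 \<noteq> val q2" by blast
      then show False using q[of q1] q[of q2] by simp
    qed
    have "\<not> conflict T" unfolding conflict_def Let_def M using n1 n2 by blast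
    then show ?thesis using False by simp
  qed
  show ?thesis unfolding T_def[symmetric]
    by (rule quad_ext) (simp_all add: M c)
qed

lemma snap_step: assumes "sched t = p" "pcs t p = Snap"
  shows "pcs (Suc t) p = after_snapshot n (props p) (mem t)" "mem (Suc t) = mem t"
  using step_Snap[of t] assms by simp_all

lemma wr_step: assumes "sched t = p" "pcs t p = Wr x Y"
  shows "pcs (Suc t) p = Snap" "mem (Suc t) = (mem t)(x := Y)"
  using step_Wr[of t x Y] assms by simp_all

lemma card_ne_le: "card {i. i < n \<and> P i} \<le> n"
proof -
  have "card {i. i < n \<and> P i} \<le> card {..<n}" by (rule card_mono) auto
  then show ?thesis by simp
qed

lemma uniform_step:
  assumes s: "sched t = p" "sched (Suc t) = p" and pc: "pcs t p = Snap" and u: "unif n (mem t)"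
    and nd: "\<not> (lvl (mem t 0) \<and> \<not> cfl (mem t 0))"
  defines "M \<equiv> mem t 0"
  defines "Y \<equiv> (rd M + 1, \<not> lvl M \<and> \<not> cfl M, False, val M)"
  shows "pcs (Suc (Suc t)) p = Snap \<and> FillV p (mem (Suc (Suc t))) Y \<and> phi Y (mem (Suc (Suc t))) < n * stage M"
proof -
  have a: "after_snapshot n (props p) (mem t) = Wr 0 Y"
  proof -
    have "after_snapshot n (props p) (mem t) = (if lvl (mem t 0) \<and> \<not> cfl (mem t 0) then Done (val (mem t 0))
          else Wr 0 (rd (mem t 0) + 1, \<not> lvl (mem t 0) \<and> \<not> cfl (mem t 0), False, val (mem t 0)))"
      using u by (simp only: after_snapshot_char[OF n_pos] if_True simp_thms)
    then show ?thesis using nd unfolding Y_def M_def by simp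
  qed
  have p1: "pcs (Suc t) p = Wr 0 Y" "mem (Suc t) = mem t" using snap_step[OF s(1) pc] a by simp_all
  have p2: "pcs (Suc (Suc t)) p = Snap" "mem (Suc (Suc t)) = (mem t)(0 := Y)"
    using wr_step[OF s(2) p1(1)] p1(2) by simp_all
  have r0: "0 < rd M" using u unfolding unif_def M_def by simp
  have allM: "i < n \<Longrightarrow> mem t i = M" for i using unif_all[OF u, of i] unfolding M_def by blast
  have MY: "M < Y" by (rule quad_lt_rd) (simp add: Y_def)
  have c1: "\<forall>i<n. ((mem t)(0 := Y)) i \<le> Y" using allM MY by auto
  have c2: "own p \<le> Y" by (rule less_imp_le, rule quad_lt_rd) (simp add: own_def Y_def r0)
  have c3: "\<exists>i<n. ((mem t)(0 := Y)) i = Y" using n_pos by auto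
  have c4: "0 < rd Y" by (simp add: Y_def)
  have c5: "\<forall>i<n. rd (((mem t)(0 := Y)) i) = rd Y \<longrightarrow> \<not> cfl (((mem t)(0 := Y)) i) \<and> val (((mem t)(0 := Y)) i) = val Y"
    using allM by (auto simp: Y_def)
  have c6: "rd Y = 1 \<longrightarrow> Some (props p) = val Y" using r0 by (simp add: Y_def)
  have F: "FillV p (mem (Suc (Suc t))) Y" unfolding FillV_def p2(2) using c1 c2 c3 c4 c5 c6 by blast
  have "{i. i < n \<and> ((mem t)(0 := Y)) i \<noteq> Y} \<subseteq> {..<n} - {0}" by auto
  then have "card {i. i < n \<and> ((mem t)(0 := Y)) i \<noteq> Y} \<le> card ({..<n} - {0::nat})" by (rule card_mono[rotated]) simp
  then have c: "card {i. i < n \<and> ((mem t)(0 := Y)) i \<noteq> Y} < n" using n_pos by simp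
  have st: "stage M = Suc (stage Y)" using nd unfolding stage_def Y_def M_def by auto
  have ph: "phi Y (mem (Suc (Suc t))) = card {i. i < n \<and> ((mem t)(0 := Y)) i \<noteq> Y} + n * stage Y"
    unfolding phi_def p2(2) ..
  have "card {i. i < n \<and> ((mem t)(0 := Y)) i \<noteq> Y} + n * stage Y < n * stage M"
    unfolding st using c by simp
  then have "phi Y (mem (Suc (Suc t))) < n * stage M" unfolding ph .
  then show ?thesis using p2(1) F by blast
qed

lemma nonunif_step:
  assumes s: "sched t = p" "sched (Suc t) = p" and pc: "pcs t p = Snap" and u: "\<not> unif n (mem t)"
  defines "S \<equiv> qsup (mem t ` {..<n} \<union> {own p})"
  shows "\<exists>x<n. mem t x \<noteq> S \<and> pcs (Suc (Suc t)) p = Snap \<and> mem (Suc (Suc t)) = (mem t)(x := S) \<and>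
           FillV p (mem (Suc (Suc t))) S"
proof -
  define T where "T = mem t ` {..<n} \<union> {own p}"
  have fin: "finite T" "T \<noteq> {}" unfolding T_def by simp_all
  have ownT: "own p \<in> T" unfolding T_def by simp
  have rS: "0 < rd S"
  proof -
    have "own p \<le> Max T" using Max_ge[OF fin(1) ownT] .
    then have "rd (own p) \<le> rd (Max T)" by (rule quad_le_rd)
    then show ?thesis unfolding S_def T_def[symmetric] by (simp add: own_def)
  qed
  have ex: "\<exists>x. x < n \<and> mem t x \<noteq> S"
  proof (rule ccontr)
    assume "\<not> (\<exists>x. x < n \<and> mem t x \<noteq> S)"
    then have "\<forall>i<n. mem t i = S" by blast
    then have "unif n (mem t)" unfolding unif_def using rS n_pos by simp
    then show False using u by simp
  qed
  define x where "x = (LEAST x. x < n \<and> mem t x \<noteq> S)"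
  have x: "x < n" "mem t x \<noteq> S" using LeastI_ex[OF ex] unfolding x_def by blast+
  have a: "after_snapshot n (props p) (mem t) = Wr x S"
    using u unfolding x_def S_def own_def by (simp only: after_snapshot_char[OF n_pos] if_False Let_def)
  have p1: "pcs (Suc t) p = Wr x S" "mem (Suc t) = mem t" using snap_step[OF s(1) pc] a by simp_all
  have p2: "pcs (Suc (Suc t)) p = Snap" "mem (Suc (Suc t)) = (mem t)(x := S)"
    using wr_step[OF s(2) p1(1)] p1(2) by simp_all
  have SS: "S = qsup T" unfolding S_def T_def ..
  have F: "FillV p ((mem t)(x := S)) S" unfolding FillV_def
  proof (intro conjI impI)
    show "\<forall>i<n. ((mem t)(x := S)) i \<le> S"
    proof (intro allI impI)
      fix i assume "i < n"
      then have "mem t i \<in> T" unfolding T_def by simp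
      then show "((mem t)(x := S)) i \<le> S" unfolding SS using qsup_ge[OF fin(1)] by simp
    qed
    show "own p \<le> S" unfolding SS by (rule qsup_ge[OF fin(1) ownT])
    show "\<exists>i<n. ((mem t)(x := S)) i = S" using x by auto
    show "0 < rd S" by (rule rS)
  next
    assume nc: "\<not> cfl S"
    then have ncT: "\<not> conflict T" unfolding SS by simp
    show "\<forall>i<n. rd (((mem t)(x := S)) i) = rd S \<longrightarrow> \<not> cfl (((mem t)(x := S)) i) \<and> val (((mem t)(x := S)) i) = val S"
    proof (intro allI impI)
      fix i assume i: "i < n" "rd (((mem t)(x := S)) i) = rd S"
      show "\<not> cfl (((mem t)(x := S)) i) \<and> val (((mem t)(x := S)) i) = val S"
      proof (cases "i = x")
        case True then show ?thesis using nc by simp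
      next
        case False
        then have "mem t i \<in> T" "rd (mem t i) = rd (Max T)" using i unfolding T_def SS by simp_all
        then show ?thesis using no_conflict[OF ncT _ _ fin(1)] False unfolding SS by simp
      qed
    qed
    show "rd S = 1 \<Longrightarrow> Some (props p) = val S"
    proof -
      assume "rd S = 1"
      then have "rd (own p) = rd (Max T)" unfolding SS by (simp add: own_def)
      then show ?thesis using no_conflict[OF ncT ownT _ fin(1)] unfolding SS by (simp add: own_def)
    qed
  qed
  have F2: "FillV p (mem (Suc (Suc t))) S" using F p2(2) by simp
  show ?thesis using x p2 F2 by blast
qed

lemma solo_fill:
  assumes solo: "\<forall>t\<ge>T0. sched t = p"
  shows "T0 \<le> t \<Longrightarrow> pcs t p = Snap \<Longrightarrow> FillV p (mem t) S \<Longrightarrow> phi S (mem t) = N \<Longrightarrow> \<exists>t' w. pcs t' p = Done w"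
proof (induction N arbitrary: t S rule: less_induct)
  case (less N)
  have s: "sched t = p" "sched (Suc t) = p" using solo less.prems(1) by simp_all
  show ?case
  proof (cases "unif n (mem t)")
    case True
    obtain i0 where "i0 < n" "mem t i0 = S" using less.prems(3) unfolding FillV_def by blast
    then have M: "mem t 0 = S" using unif_all[OF True, of i0] by simp
    have allS: "\<forall>i<n. mem t i = S" using unif_all[OF True] M by metis
    show ?thesis
    proof (cases "lvl (mem t 0) \<and> \<not> cfl (mem t 0)")
      case True2: True
      have "after_snapshot n (props p) (mem t) = Done (val (mem t 0))"
        using True True2 by (simp only: after_snapshot_char[OF n_pos] if_True simp_thms)
      then have "pcs (Suc t) p = Done (val (mem t 0))" using snap_step[OF s(1) less.prems(2)] by simp
      then show ?thesis by blast
    next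
      case False
      obtain Y where Y: "pcs (Suc (Suc t)) p = Snap" "FillV p (mem (Suc (Suc t))) Y"
          "phi Y (mem (Suc (Suc t))) < n * stage S"
        using uniform_step[OF s less.prems(2) True False] M by blast
      have "phi S (mem t) = n * stage S" unfolding phi_def using allS by simp
      then have "phi Y (mem (Suc (Suc t))) < N" using Y(3) less.prems(4) by simp
      then show ?thesis using less.IH[OF _ _ Y(1) Y(2) refl] less.prems(1) by simp
    qed
  next
    case False
    obtain x where x: "x < n" "mem t x \<noteq> qsup (mem t ` {..<n} \<union> {own p})"
        "pcs (Suc (Suc t)) p = Snap" "mem (Suc (Suc t)) = (mem t)(x := qsup (mem t ` {..<n} \<union> {own p}))"
        "FillV p (mem (Suc (Suc t))) (qsup (mem t ` {..<n} \<union> {own p}))"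
      using nonunif_step[OF s less.prems(2) False] by blast
    have qS: "qsup (mem t ` {..<n} \<union> {own p}) = S" by (rule fill_qsup[OF less.prems(3)])
    have "{i. i < n \<and> ((mem t)(x := S)) i \<noteq> S} = {i. i < n \<and> mem t i \<noteq> S} - {x}" by auto
    moreover have "card ({i. i < n \<and> mem t i \<noteq> S} - {x}) < card {i. i < n \<and> mem t i \<noteq> S}"
    proof (rule card_Diff1_less)
      show "finite {i. i < n \<and> mem t i \<noteq> S}" by (rule finite_subset[of _ "{..<n}"]) auto
      show "x \<in> {i. i < n \<and> mem t i \<noteq> S}" using x qS by simp
    qed
    ultimately have "phi S (mem (Suc (Suc t))) < N" using less.prems(4) x(4) qS unfolding phi_def by simp
    then show ?thesis using less.IH[OF _ _ x(3)] x(5) qS less.prems(1) by simp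
  qed
qed

lemma ob_termination:
  assumes solo: "\<forall>t\<ge>T0. sched t = p"
  shows "\<exists>t w. pcs t p = Done w"
proof -
  have "\<exists>t\<ge>T0. pcs t p = Snap \<or> (\<exists>w. pcs t p = Done w)"
  proof (cases "pcs T0 p")
    case (Wr x Y) then have "pcs (Suc T0) p = Snap" using wr_step[of T0 p x Y] solo by simp
    then show ?thesis by (intro exI[of _ "Suc T0"]) simp
  qed auto
  then obtain t where t: "T0 \<le> t" "pcs t p = Snap \<or> (\<exists>w. pcs t p = Done w)" by blast
  show ?thesis
  proof (cases "pcs t p = Snap")
    case False then show ?thesis using t by blast
  next
    case True
    have s: "sched t = p" "sched (Suc t) = p" using solo t(1) by simp_all
    show ?thesis
    proof (cases "unif n (mem t)")
      case u: True
      show ?thesis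
      proof (cases "lvl (mem t 0) \<and> \<not> cfl (mem t 0)")
        case True2: True
        have "after_snapshot n (props p) (mem t) = Done (val (mem t 0))"
          using u True2 by (simp only: after_snapshot_char[OF n_pos] if_True simp_thms)
        then have "pcs (Suc t) p = Done (val (mem t 0))" using snap_step[OF s(1) True] by simp
        then show ?thesis by blast
      next
        case False
        obtain Y where Y: "pcs (Suc (Suc t)) p = Snap" "FillV p (mem (Suc (Suc t))) Y"
          using uniform_step[OF s True u False] by blast
        show ?thesis by (rule solo_fill[OF solo _ Y(1) Y(2) refl]) (use t in simp)
      qed
    next
      case False
      obtain x S where Y: "pcs (Suc (Suc t)) p = Snap" "FillV p (mem (Suc (Suc t))) S"
        using nonunif_step[OF s True False] by blast
      show ?thesis by (rule solo_fill[OF solo _ Y(1) Y(2) refl]) (use t in simp)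
    qed
  qed
qed

end


lemma sum_upd: fixes n x :: nat assumes "x < n"
  shows "(\<Sum>i<n. h ((V(x := Y)) i)) + h (V x) = (\<Sum>i<n. h (V i)) + (h Y :: nat)"
proof -
  have fin: "finite {..<n}" and xin: "x \<in> {..<n}" using assms by simp_all
  have e: "(\<Sum>i\<in>{..<n} - {x}. h ((V(x := Y)) i)) = (\<Sum>i\<in>{..<n} - {x}. h (V i))"
    by (rule sum.cong) auto
  have "(\<Sum>i<n. h ((V(x := Y)) i)) = h Y + (\<Sum>i\<in>{..<n} - {x}. h ((V(x := Y)) i))"
    using sum.remove[OF fin xin, of "\<lambda>i. h ((V(x := Y)) i)"] by simp
  moreover have "(\<Sum>i<n. h (V i)) = h (V x) + (\<Sum>i\<in>{..<n} - {x}. h (V i))"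
    using sum.remove[OF fin xin, of "\<lambda>i. h (V i)"] by simp
  ultimately show ?thesis using e by simp
qed

lemma sum_bound: fixes n p :: nat assumes "p < n" "g' p = 0" "\<And>q. q < n \<Longrightarrow> q \<noteq> p \<Longrightarrow> g' q \<le> g q + b"
  shows "(\<Sum>q<n. g' q) + g p \<le> (\<Sum>q<n. g q) + n * (b::nat)"
proof -
  have "(\<Sum>q<n. g' q + (if q = p then g p else 0)) \<le> (\<Sum>q<n. g q + b)"
    by (rule sum_mono) (use assms in auto)
  moreover have "(\<Sum>q<n. g' q + (if q = p then g p else 0)) = (\<Sum>q<n. g' q) + g p"
    using assms(1) by (simp add: sum.distrib)
  moreover have "(\<Sum>q<n. g q + b) = (\<Sum>q<n. g q) + n * b" by (simp add: sum.distrib)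
  ultimately show ?thesis by simp
qed

lemma qsup_single: assumes "finite T" "M \<in> T" "\<forall>q\<in>T. q \<le> M" "\<forall>q\<in>T. rd q = rd M \<longrightarrow> q = M" "\<not> cfl M"
  shows "qsup T = M"
proof -
  have Mx: "Max T = M" by (rule Max_eqI) (use assms in auto)
  have "\<not> conflict T" unfolding conflict_def Let_def Mx using assms(4,5) by metis
  then show ?thesis by (intro quad_ext) (simp_all add: Mx assms(5))
qed

context sys begin

definition qA :: "'v quad" where "qA = (1, False, False, Some (props 0))"
definition qB :: "'v quad" where "qB = (2, True, False, Some (props 0))"

lemma qAB_ne[simp]: "qA \<noteq> qB" "qB \<noteq> qA" "qA \<noteq> init_quad" "init_quad \<noteq> qA" "qB \<noteq> init_quad" "init_quad \<noteq> qB"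
  by (simp_all add: qA_def qB_def init_quad_def)

lemma qAB_rd[simp]: "rd qA = 1" "rd qB = 2" "rd init_quad = 0" "lvl qA = False" "lvl qB = True" "cfl qA = False" "cfl qB = False"
  by (simp_all add: qA_def qB_def init_quad_def)

definition SVinv :: "nat \<Rightarrow> bool" where
  "SVinv t = ((\<forall>i<n. mem t i = init_quad \<or> mem t i = qA \<or> mem t i = qB) \<and>
      (\<forall>q x Y. pcs t q = Wr x Y \<longrightarrow> x < n \<and> (Y = qA \<or> Y = qB)))"

lemma sv_snap:
  assumes hom: "\<forall>p<n. \<forall>q<n. props p = props q" and pn: "p < n"
    and V: "\<forall>i<n. V i = init_quad \<or> V i = qA \<or> V i = qB"
    and a: "after_snapshot n (props p) V = Wr x Y"
  shows "x < n \<and> V x \<noteq> Y \<and> (Y = qB \<or> (Y = qA \<and> V x = init_quad))"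
proof (cases "unif n V")
  case True
  have ae: "after_snapshot n (props p) V = (if lvl (V 0) \<and> \<not> cfl (V 0) then Done (val (V 0))
       else Wr 0 (rd (V 0) + 1, \<not> lvl (V 0) \<and> \<not> cfl (V 0), False, val (V 0)))"
    using True by (simp only: after_snapshot_char[OF n_pos] if_True)
  have r: "0 < rd (V 0)" using True unfolding unif_def by simp
  have "V 0 = init_quad \<or> V 0 = qA \<or> V 0 = qB" using V n_pos by blast
  then have V0: "V 0 = qA \<or> V 0 = qB" using r by auto
  show ?thesis
  proof (cases "V 0 = qB")
    case True
    then have "after_snapshot n (props p) V = Done (val qB)" using ae by simp
    then show ?thesis using a by simp
  next
    case False
    then have A: "V 0 = qA" using V0 by simp
    then have "after_snapshot n (props p) V = Wr 0 qB" using ae by (simp add: qA_def qB_def)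
    then have "x = 0" "Y = qB" using a by simp_all
    then show ?thesis using n_pos A by simp
  qed
next
  case False
  define T where "T = V ` {..<n} \<union> {(1, False, False, Some (props p))}"
  have pp: "props p = props 0" using hom pn n_pos by blast
  have own: "(1, False, False, Some (props p)) = qA" unfolding qA_def pp ..
  have fin: "finite T" unfolding T_def by simp
  have AT: "qA \<in> T" unfolding T_def own by simp
  have Tsub: "q = init_quad \<or> q = qA \<or> q = qB" if "q \<in> T" for q
  proof -
    have "q = qA \<or> (\<exists>i<n. q = V i)" using that unfolding T_def own by blast
    then show ?thesis
    proof
      assume "\<exists>i<n. q = V i"
      then obtain i where "i < n" "q = V i" by blast
      then show ?thesis using V by simp
    qed simp
  qed
  have leB: "q \<le> qB" if qT: "q \<in> T" for q
  proof -
    consider "q = init_quad" | "q = qA" | "q = qB" using Tsub[OF qT] by blast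
    then show ?thesis
    proof cases
      case 1 then show ?thesis by (intro less_imp_le quad_lt_rd) simp
    next
      case 2 then show ?thesis by (intro less_imp_le quad_lt_rd) simp
    qed simp
  qed
  have rdB: "q = qB" if "q \<in> T" "rd q = rd qB" for q
    using Tsub[OF that(1)] that(2) by auto
  have S: "qsup T = (if qB \<in> T then qB else qA)"
  proof (cases "qB \<in> T")
    case True
    have "qsup T = qB" by (rule qsup_single[OF fin True]) (use leB rdB in auto)
    then show ?thesis using True by simp
  next
    case False
    have leA: "q \<le> qA" if qT: "q \<in> T" for q
    proof -
      consider "q = init_quad" | "q = qA" using Tsub[OF qT] False qT by blast
      then show ?thesis
      proof cases
        case 1 then show ?thesis by (intro less_imp_le quad_lt_rd) simp
      qed simp
    qed
    have rdA: "q = qA" if "q \<in> T" "rd q = rd qA" for q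
      using Tsub[OF that(1)] that(2) False that(1) by auto
    have "qsup T = qA" by (rule qsup_single[OF fin AT]) (use leA rdA in auto)
    then show ?thesis using False by simp
  qed
  define Sx where "Sx = qsup T"
  have ex: "\<exists>x. x < n \<and> V x \<noteq> Sx"
  proof (rule ccontr)
    assume "\<not> (\<exists>x. x < n \<and> V x \<noteq> Sx)"
    then have "\<forall>i<n. V i = Sx" by blast
    moreover have "0 < rd Sx" unfolding Sx_def S by simp
    ultimately have "unif n V" unfolding unif_def using n_pos by simp
    then show False using False by simp
  qed
  have ae: "after_snapshot n (props p) V = Wr (LEAST x. x < n \<and> V x \<noteq> Sx) Sx"
    using False unfolding Sx_def T_def by (simp only: after_snapshot_char[OF n_pos] if_False Let_def)
  then have xY: "x = (LEAST x. x < n \<and> V x \<noteq> Sx)" "Y = Sx" using a by simp_all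
  have x: "x < n" "V x \<noteq> Sx" using LeastI_ex[OF ex] xY(1) by simp_all
  show ?thesis
  proof (cases "qB \<in> T")
    case True then show ?thesis using x xY S Sx_def by simp
  next
    case F2: False
    have "V x \<in> T" using x(1) unfolding T_def by simp
    then have "V x \<noteq> qB" using F2 by (metis)
    moreover have "V x \<noteq> qA" using x(2) S F2 Sx_def by simp
    ultimately have "V x = init_quad" using V x(1) by blast
    then show ?thesis using x xY S F2 Sx_def by simp
  qed
qed

end


locale svsys = sys n props sched for n and props :: "nat \<Rightarrow> 'v::linorder" and sched +
  assumes hom: "\<forall>p<n. \<forall>q<n. props p = props q"
begin

lemma after_not_Snap: "after_snapshot n v V \<noteq> Snap"
  unfolding after_snapshot_char[OF n_pos] by (simp add: Let_def)

lemma SVinv_all: "SVinv t"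
proof (induction t)
  case 0 show ?case unfolding SVinv_def by (simp add: mem0 pcs0)
next
  case (Suc t)
  define p where "p = sched t"
  have pn: "p < n" using p_def sched_lt' by simp
  have Im: "\<forall>i<n. mem t i = init_quad \<or> mem t i = qA \<or> mem t i = qB" using Suc unfolding SVinv_def by blast
  have Iw: "pcs t q = Wr x Y \<Longrightarrow> x < n \<and> (Y = qA \<or> Y = qB)" for q x Y using Suc unfolding SVinv_def by blast
  have oth: "q \<noteq> p \<Longrightarrow> pcs (Suc t) q = pcs t q" for q using step_other[of q t] p_def by simp
  show ?case
  proof (cases "pcs t p")
    case Snap
    note st = step_Snap[OF Snap[unfolded p_def]]
    have pa: "pcs (Suc t) p = after_snapshot n (props p) (mem t)" using st(2) p_def by simp
    show ?thesis unfolding SVinv_def st(1)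
    proof (rule conjI[OF Im], intro allI impI)
      fix q x Y assume a: "pcs (Suc t) q = Wr x Y"
      show "x < n \<and> (Y = qA \<or> Y = qB)"
      proof (cases "q = p")
        case True
        then have "after_snapshot n (props p) (mem t) = Wr x Y" using a pa by simp
        then show ?thesis using sv_snap[OF hom pn Im] by blast
      next
        case False then show ?thesis using a oth Iw by simp
      qed
    qed
  next
    case (Wr x Y)
    note st = step_Wr[OF Wr[unfolded p_def]]
    have xY: "x < n \<and> (Y = qA \<or> Y = qB)" using Iw Wr by blast
    show ?thesis unfolding SVinv_def st(1)
    proof (rule conjI; intro allI impI)
      fix i assume "i < n" then show "((mem t)(x := Y)) i = init_quad \<or> ((mem t)(x := Y)) i = qA \<or> ((mem t)(x := Y)) i = qB"
        using Im xY by (cases "i = x") simp_all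
    next
      fix q x' Y' assume a: "pcs (Suc t) q = Wr x' Y'"
      have "q \<noteq> p" using a st(2) p_def by auto
      then show "x' < n \<and> (Y' = qA \<or> Y' = qB)" using a oth Iw by simp
    qed
  next
    case (Done w)
    note st = step_Done[OF Done[unfolded p_def]]
    show ?thesis unfolding SVinv_def st using Im Iw by blast
  qed
qed

definition fq :: "'v quad \<Rightarrow> nat" where
  "fq Y = (if Y = init_quad then 2 * n + 2 else if Y = qA then 1 else 0)"
definition gq :: "nat \<Rightarrow> nat \<Rightarrow> nat" where
  "gq t q = (case pcs t q of Wr x Y \<Rightarrow> if Y = qA \<and> mem t x \<noteq> init_quad then 2 else 0 | _ \<Rightarrow> 0)"
definition Phi :: "nat \<Rightarrow> nat" where
  "Phi t = (\<Sum>i<n. fq (mem t i)) + (\<Sum>q<n. gq t q)"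

lemma Phi_step: "Phi (Suc t) \<le> Phi t \<and>
   (\<forall>x Y. pcs t (sched t) = Wr x Y \<and> \<not> (Y = qB \<and> mem t x = qB) \<longrightarrow> Phi (Suc t) < Phi t)"
proof -
  define p where "p = sched t"
  have pn: "p < n" using p_def sched_lt' by simp
  have Im: "\<forall>i<n. mem t i = init_quad \<or> mem t i = qA \<or> mem t i = qB" using SVinv_all[of t] unfolding SVinv_def by blast
  have Iw: "pcs t q = Wr x Y \<Longrightarrow> x < n \<and> (Y = qA \<or> Y = qB)" for q x Y using SVinv_all[of t] unfolding SVinv_def by blast
  have oth: "q \<noteq> p \<Longrightarrow> pcs (Suc t) q = pcs t q" for q using step_other[of q t] p_def by simp
  show ?thesis
  proof (cases "pcs t p")
    case Snap
    note st = step_Snap[OF Snap[unfolded p_def]]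
    have pa: "pcs (Suc t) p = after_snapshot n (props p) (mem t)" using st(2) p_def by simp
    have "gq (Suc t) q = gq t q" if "q < n" for q
    proof (cases "q = p")
      case True
      have g0: "gq t q = 0" unfolding gq_def using True Snap by simp
      show ?thesis
      proof (cases "after_snapshot n (props p) (mem t)")
        case (Wr x Y)
        then have "Y = qB \<or> (Y = qA \<and> mem t x = init_quad)" using sv_snap[OF hom pn Im] by blast
        then show ?thesis unfolding g0 unfolding gq_def st(1) using True pa Wr by auto
      next
        case (Done w) then show ?thesis unfolding g0 unfolding gq_def using True pa by simp
      next
        case Snap2: Snap then show ?thesis using after_not_Snap[of "props p" "mem t"] by blast
      qed
    next
      case False then show ?thesis unfolding gq_def st(1) using oth by simp
    qed
    then have "(\<Sum>q<n. gq (Suc t) q) = (\<Sum>q<n. gq t q)" by (intro sum.cong) auto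
    then have "Phi (Suc t) = Phi t" unfolding Phi_def st(1) by simp
    then show ?thesis using Snap p_def by simp
  next
    case (Done w)
    note st = step_Done[OF Done[unfolded p_def]]
    have "Phi (Suc t) = Phi t" unfolding Phi_def gq_def st ..
    then show ?thesis using Done p_def by simp
  next
    case (Wr x Y)
    note st = step_Wr[OF Wr[unfolded p_def]]
    have xY: "x < n" "Y = qA \<or> Y = qB" using Iw Wr by blast+
    define c where "c = mem t x"
    have c: "c = init_quad \<or> c = qA \<or> c = qB" using Im xY(1) c_def by blast
    define b where "b = (if c = init_quad then 2 else (0::nat))"
    have sf: "(\<Sum>i<n. fq (mem (Suc t) i)) + fq c = (\<Sum>i<n. fq (mem t i)) + fq Y"
      unfolding st(1) c_def by (rule sum_upd[OF xY(1)])
    have gp: "gq t p = (if Y = qA \<and> c \<noteq> init_quad then 2 else 0)" unfolding gq_def c_def using Wr by simp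
    have sg: "(\<Sum>q<n. gq (Suc t) q) + gq t p \<le> (\<Sum>q<n. gq t q) + n * b"
    proof (rule sum_bound[OF pn])
      show "gq (Suc t) p = 0" unfolding gq_def using st(2) p_def by simp
    next
      fix q assume q: "q < n" "q \<noteq> p"
      show "gq (Suc t) q \<le> gq t q + b"
      proof (cases "pcs t q")
        case (Wr x' Y')
        have "pcs (Suc t) q = Wr x' Y'" using oth q(2) Wr by simp
        then show ?thesis unfolding gq_def st(1) using Wr xY(2) c_def b_def by (auto simp: fun_upd_apply)
      qed (use oth q in \<open>simp_all add: gq_def\<close>)
    qed
    have Phi': "Phi (Suc t) + fq c + gq t p \<le> Phi t + fq Y + n * b"
      using sf sg unfolding Phi_def by simp
    have fY: "fq Y \<le> 1" using xY(2) unfolding fq_def by auto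
    have nstrict: "Phi (Suc t) < Phi t" if "\<not> (Y = qB \<and> c = qB)"
    proof -
      consider "c = init_quad" | "c = qA" | "c = qB" using c by blast
      then show ?thesis
      proof cases
        case 1 then show ?thesis using Phi' fY unfolding fq_def b_def by simp
      next
        case 2 then show ?thesis using Phi' xY(2) gp unfolding fq_def b_def by auto
      next
        case 3 then have "Y = qA" using that xY(2) by simp
        then show ?thesis using Phi' gp 3 unfolding fq_def b_def by simp
      qed
    qed
    have le: "Phi (Suc t) \<le> Phi t"
    proof (cases "Y = qB \<and> c = qB")
      case True then show ?thesis using Phi' gp unfolding fq_def b_def by simp
    next
      case False then show ?thesis using nstrict by simp
    qed
    show ?thesis using le nstrict Wr p_def c_def by auto
  qed
qed

lemma Phi_mono: "Phi (t0 + k) \<le> Phi t0"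
proof (induction k)
  case (Suc k) then show ?case using Phi_step[of "t0 + k"] by simp
qed simp

lemma pc_stable: "(\<forall>u. a \<le> u \<and> u < a + k \<longrightarrow> sched u \<noteq> p) \<Longrightarrow> pcs (a + k) p = pcs a p"
proof (induction k)
  case (Suc k)
  then have "pcs (a + k) p = pcs a p" by simp
  moreover have "sched (a + k) \<noteq> p" using Suc.prems by simp
  ultimately show ?case using step_other[of p "a + k"] by simp
qed simp

lemma next_p: assumes "\<forall>T. \<exists>t\<ge>T. sched t = p"
  shows "\<exists>b\<ge>a. sched b = p \<and> pcs b p = pcs a p"
proof -
  have ex: "\<exists>b. a \<le> b \<and> sched b = p" using assms by blast
  define b where "b = (LEAST b. a \<le> b \<and> sched b = p)"
  have b: "a \<le> b" "sched b = p" using LeastI_ex[OF ex] unfolding b_def by blast+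
  have "\<forall>u. a \<le> u \<and> u < a + (b - a) \<longrightarrow> sched u \<noteq> p"
  proof (intro allI impI)
    fix u assume "a \<le> u \<and> u < a + (b - a)"
    then have "u < b" using b(1) by simp
    then show "sched u \<noteq> p" using not_less_Least[of u "\<lambda>b. a \<le> b \<and> sched b = p"] \<open>a \<le> u \<and> u < a + (b - a)\<close>
      unfolding b_def by blast
  qed
  then have "pcs (a + (b - a)) p = pcs a p" by (rule pc_stable)
  then show ?thesis using b by (intro exI[of _ b]) simp
qed

lemma frozen:
  assumes nostrict: "\<forall>s\<ge>t0. \<forall>x Y. pcs s (sched s) = Wr x Y \<longrightarrow> Y = qB \<and> mem s x = qB"
    and s1: "t0 \<le> s1" and i: "mem s1 i \<noteq> qB"
  shows "mem (s1 + k) i = mem s1 i"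
proof (induction k)
  case (Suc k)
  define s where "s = s1 + k"
  have "mem (Suc s) i = mem s i"
  proof (cases "pcs s (sched s)")
    case Snap then show ?thesis using step_Snap by simp
  next
    case (Done w) then show ?thesis using step_Done by simp
  next
    case (Wr x Y)
    have "t0 \<le> s" using s1 s_def by simp
    then have "Y = qB \<and> mem s x = qB" using nostrict Wr by blast
    then have "Y = qB" "mem s x = qB" by simp_all
    moreover have "mem s i \<noteq> qB" using Suc i s_def by simp
    ultimately have "i \<noteq> x" by auto
    then show ?thesis using step_Wr[OF Wr] by simp
  qed
  then show ?case using Suc s_def by simp
qed simp

lemma sv_termination:
  assumes pn: "p < n" and inf: "\<forall>T. \<exists>t\<ge>T. sched t = p"
  shows "\<exists>t w. pcs t p = Done w"
proof (rule ccontr)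
  assume nd: "\<not> (\<exists>t w. pcs t p = Done w)"
  have dec: "\<exists>t1. Phi t1 < Phi t0" for t0
  proof (rule ccontr)
    assume "\<not> (\<exists>t1. Phi t1 < Phi t0)"
    then have ge: "Phi t0 \<le> Phi t1" for t1 by (meson not_le)
    have eqs: "Phi (Suc s) = Phi s" if "t0 \<le> s" for s
    proof -
      have "Phi s \<le> Phi t0" using Phi_mono[of t0 "s - t0"] that by simp
      then show ?thesis using Phi_step[of s] ge[of "Suc s"] by simp
    qed
    have nostrict: "\<forall>s\<ge>t0. \<forall>x Y. pcs s (sched s) = Wr x Y \<longrightarrow> Y = qB \<and> mem s x = qB"
    proof (intro allI impI)
      fix s x Y assume "t0 \<le> s" "pcs s (sched s) = Wr x Y"
      then show "Y = qB \<and> mem s x = qB" using Phi_step[of s] eqs[of s] by fastforce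
    qed
    obtain t1 where t1: "t0 \<le> t1" "sched t1 = p" using inf by blast
    have "\<exists>s\<ge>t0. sched s = p \<and> pcs s p = Snap"
    proof (cases "pcs t1 p")
      case Snap then show ?thesis using t1 by blast
    next
      case (Done w) then show ?thesis using nd by blast
    next
      case (Wr x Y)
      then have "pcs (Suc t1) p = Snap" using wr_step[OF t1(2)] by simp
      moreover obtain b where "Suc t1 \<le> b" "sched b = p" "pcs b p = pcs (Suc t1) p" using next_p[OF inf] by blast
      ultimately show ?thesis using t1 by (intro exI[of _ b]) simp
    qed
    then obtain s where s: "t0 \<le> s" "sched s = p" "pcs s p = Snap" by blast
    have pa: "pcs (Suc s) p = after_snapshot n (props p) (mem s)" using snap_step[OF s(2) s(3)] by simp
    obtain x Y where a: "after_snapshot n (props p) (mem s) = Wr x Y"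
    proof (cases "after_snapshot n (props p) (mem s)")
      case (Done w) then show ?thesis using nd pa by auto
    next
      case Snap then show ?thesis using after_not_Snap[of "props p" "mem s"] by blast
    qed
    have Im: "\<forall>i<n. mem s i = init_quad \<or> mem s i = qA \<or> mem s i = qB" using SVinv_all[of s] unfolding SVinv_def by blast
    have xs: "x < n" "mem s x \<noteq> Y" using sv_snap[OF hom pn Im a] by blast+
    obtain b where b: "Suc s \<le> b" "sched b = p" "pcs b p = pcs (Suc s) p" using next_p[OF inf] by blast
    have "pcs b (sched b) = Wr x Y" using b pa a by simp
    moreover have "t0 \<le> b" using b(1) s(1) by simp
    ultimately have "Y = qB \<and> mem b x = qB" using nostrict by blast
    then have "Y = qB" "mem b x = qB" by simp_all
    moreover have "mem (s + (b - s)) x = mem s x" by (rule frozen[OF nostrict s(1)]) (use xs \<open>Y = qB\<close> in simp)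
    ultimately show False using xs b(1) by simp
  qed
  have "Phi t \<noteq> N" for t N
  proof (induction N arbitrary: t rule: less_induct)
    case (less N)
    show ?case
    proof
      assume "Phi t = N"
      obtain t1 where "Phi t1 < Phi t" using dec by blast
      then show False using less.IH[of "Phi t1" t1] \<open>Phi t = N\<close> by simp
    qed
  qed
  then show False by blast
qed

end

theorem theorem1:
  fixes n :: nat and props :: "nat \<Rightarrow> 'v::linorder" and sched :: "nat \<Rightarrow> nat"
  assumes "\<forall>t. sched t < n"
  shows
    "(\<forall>p<n. \<forall>t w. decides_at n props sched t p w \<longrightarrow> (\<exists>q<n. w = Some (props q)))
   \<and> (\<forall>p<n. \<forall>q<n. \<forall>t t' w w'. decides_at n props sched t p w \<and> decides_at n props sched t' q w'
          \<longrightarrow> w = w')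
   \<and> (\<forall>p<n. \<forall>T. (\<forall>t\<ge>T. sched t = p) \<longrightarrow> (\<exists>t w. decides_at n props sched t p w))
   \<and> ((\<forall>p<n. \<forall>q<n. props p = props q) \<longrightarrow>
        (\<forall>p<n. (\<forall>T. \<exists>t\<ge>T. sched t = p) \<longrightarrow> (\<exists>t w. decides_at n props sched t p w)))"
proof -
  interpret S: sys n props sched by unfold_locales (rule assms)
  have dec: "decides_at n props sched t p w \<longleftrightarrow> S.pcs t p = Done w" for t p w
    unfolding decides_at_def S.pcs_def ..
  have c1: "\<forall>p<n. \<forall>t w. decides_at n props sched t p w \<longrightarrow> (\<exists>q<n. w = Some (props q))"
    using S.validity unfolding dec by blast
  have c2: "\<forall>p<n. \<forall>q<n. \<forall>t t' w w'. decides_at n props sched t p w \<and> decides_at n props sched t' q w'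
          \<longrightarrow> w = w'"
    using S.agreement unfolding dec by blast
  have c3: "\<forall>p<n. \<forall>T. (\<forall>t\<ge>T. sched t = p) \<longrightarrow> (\<exists>t w. decides_at n props sched t p w)"
    using S.ob_termination unfolding dec by blast
  have c4: "(\<forall>p<n. \<forall>q<n. props p = props q) \<longrightarrow>
        (\<forall>p<n. (\<forall>T. \<exists>t\<ge>T. sched t = p) \<longrightarrow> (\<exists>t w. decides_at n props sched t p w))"
  proof (intro impI allI)
    fix p assume hom: "\<forall>p<n. \<forall>q<n. props p = props q" and pn: "p < n"
      and inf: "\<forall>T. \<exists>t\<ge>T. sched t = p"
    interpret V: svsys n props sched by unfold_locales (rule hom)
    show "\<exists>t w. decides_at n props sched t p w" using V.sv_termination[OF pn inf] unfolding dec by blast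
  qed
  show ?thesis using c1 c2 c3 c4 by blast
qed

end
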